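(* Let $m,n\ge 0$ be integers with $m-n\equiv 0\pmod 2$, put $N=m+n$, and let $1<r<\infty$. Then $$\left(\frac{2}{r+1}+\sum_{j=0}^{N-1}\frac{\binom{N}{j+1}^{r+1}-\binom{N}{j}^{r+1}}{(r+1)\left[\binom{N}{j+1}-\binom{N}{j}\right]}\right)^{1/r} \le 2^m\Big(\sum_{j=0}^{n}\binom{n}{j}^r\Big)^{1/r}.$$
   Context: Binomial coefficients have their usual meaning. *)

theory Defs
  imports Complex_Main
begin

end

theory Submission
  imports Defs "HOL-Analysis.Analysis"
begin

lemma tangent_powr:
  fixes x b r :: real
  assumes "0 < b" "0 < x" "1 \<le> r"
  shows "x powr r - b powr r \<le> r * x powr (r - 1) * (x - b)"
proof -
  have d: "((\<lambda>x. x powr r) has_field_derivative r * x powr (r - 1)) (at x within {0<..})"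
    using assms by (auto intro!: derivative_eq_intros)
  have "b powr r - x powr r \<ge> r * x powr (r - 1) * (b - x)"
    by (rule convex_on_imp_above_tangent[OF powr_convex[OF assms(3)] _ _ _ d])
       (use assms in \<open>auto simp: interior_open\<close>)
  then show ?thesis by (simp add: algebra_simps)
qed

lemma HH_lt:
  fixes a b r :: real
  assumes "0 < b" "b < a" "1 < r"
  shows "(a powr (r+1) - b powr (r+1)) / ((r + 1) * (a - b)) \<le> (a powr r + b powr r) / 2"
proof -
  define f where "f = (\<lambda>x. (x - b) * (x powr r + b powr r) / 2 - (x powr (r+1) - b powr (r+1)) / (r+1))"
  have "f b \<le> f a"
  proof (rule DERIV_nonneg_imp_nondecreasing[OF less_imp_le[OF assms(2)]])
    fix x assume x: "b \<le> x" "x \<le> a"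
    hence xp: "0 < x" using assms by auto
    have D: "DERIV f x :> ((x powr r + b powr r) / 2 + (x - b) * (r * x powr (r - 1)) / 2
              - x powr r)"
      unfolding f_def using xp assms
      by (auto intro!: derivative_eq_intros)
    have t: "x powr r - b powr r \<le> r * x powr (r - 1) * (x - b)"
      using tangent_powr[of b x r] assms xp by auto
    have "0 \<le> (x powr r + b powr r) / 2 + (x - b) * (r * x powr (r - 1)) / 2
              - x powr r"
    proof -
      have e: "(x - b) * (r * x powr (r - 1)) = r * x powr (r - 1) * (x - b)" by (simp only: mult_ac)
      have gen: "\<And>A B C::real. A - B \<le> C \<Longrightarrow> 0 \<le> (A+B)/2 + C/2 - A" by (simp add: field_simps)
      show ?thesis unfolding e using gen[OF t] by simp
    qed
    with D show "\<exists>y. DERIV f x :> y \<and> 0 \<le> y" by blast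
  qed
  moreover have "f b = 0" unfolding f_def by simp
  ultimately have "0 \<le> (a - b) * (a powr r + b powr r) / 2 - (a powr (r+1) - b powr (r+1)) / (r+1)"
    unfolding f_def by simp
  hence h: "(a powr (r+1) - b powr (r+1)) / (r+1) \<le> (a - b) * (a powr r + b powr r) / 2" by simp
  have rp: "0 < r + 1" using assms by simp
  have "a powr (r+1) - b powr (r+1) \<le> (r+1) * ((a - b) * (a powr r + b powr r) / 2)"
    using h rp by (simp add: pos_divide_le_eq mult.commute)
  also have "\<dots> = ((r + 1) * (a - b)) * ((a powr r + b powr r) / 2)" by simp
  finally show ?thesis using assms by (subst pos_divide_le_eq) (auto simp: mult.commute)
qed

lemma HH:
  fixes a b r :: real
  assumes "0 < b" "0 < a" "1 < r"
  shows "(a powr (r+1) - b powr (r+1)) / ((r + 1) * (a - b)) \<le> (a powr r + b powr r) / 2"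
proof (cases a b rule: linorder_cases)
  case less
  have e: "(a powr (r+1) - b powr (r+1)) / ((r + 1) * (a - b)) = (b powr (r+1) - a powr (r+1)) / ((r + 1) * (b - a))"
    by (metis minus_diff_eq minus_divide_divide mult_minus_right)
  from HH_lt[OF assms(2) less assms(3)] show ?thesis
    unfolding e by (simp add: add.commute)
next
  case equal then show ?thesis using assms by simp
next
  case greater then show ?thesis using HH_lt assms by blast
qed

lemma HH_nonneg:
  fixes a b r :: real
  assumes "0 < b" "0 < a" "1 < r"
  shows "0 \<le> (a powr (r+1) - b powr (r+1)) / ((r + 1) * (a - b))"
proof (cases a b rule: linorder_cases)
  case less
  hence "a powr (r+1) < b powr (r+1)" using assms by (simp add: powr_less_mono2)
  then show ?thesis using less assms by (intro divide_nonpos_nonpos) (auto simp: mult_nonneg_nonpos)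
next
  case equal then show ?thesis by simp
next
  case greater
  hence "b powr (r+1) < a powr (r+1)" using assms by (simp add: powr_less_mono2)
  then show ?thesis using greater assms by (intro divide_nonneg_nonneg) auto
qed

lemma pow_sum_convex:
  fixes a b r :: real
  assumes "0 \<le> a" "0 \<le> b" "1 \<le> r"
  shows "(a + b) powr r \<le> 2 powr (r - 1) * (a powr r + b powr r)"
proof -
  have c: "((a + b)/2) powr r \<le> (a powr r + b powr r) / 2"
  proof (cases "a = 0 \<or> b = 0")
    case True
    have "(x/2) powr r \<le> x powr r / 2" if "0 \<le> x" for x :: real
    proof -
      have "(x/2) powr r = x powr r / 2 powr r" using that by (simp add: powr_divide)
      also have "\<dots> \<le> x powr r / 2"
      proof -
        have "2 powr 1 \<le> 2 powr r" using assms by (intro powr_mono) auto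
        then show ?thesis using that by (intro divide_left_mono) auto
      qed
      finally show ?thesis .
    qed
    then show ?thesis using True assms by auto
  next
    case False
    then have "0 < a" "0 < b" using assms by auto
    from convex_onD[OF powr_convex[OF assms(3)], of "1/2" a b] this
    show ?thesis by (simp add: field_simps scaleR_conv_of_real)
  qed
  have "(a + b) powr r = 2 powr r * ((a + b)/2) powr r"
    using assms by (simp add: powr_divide)
  also have "\<dots> \<le> 2 powr r * ((a powr r + b powr r) / 2)"
    using c by (intro mult_left_mono) auto
  also have "\<dots> = 2 powr (r - 1) * (a powr r + b powr r)"
    by (simp add: powr_diff)
  finally show ?thesis .
qed

definition S :: "real \<Rightarrow> nat \<Rightarrow> real" where
  "S r k = (\<Sum>j\<le>k. real (k choose j) powr r)"

lemma S_ge1: "1 \<le> S r k"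
proof -
  have "real (k choose 0) powr r \<le> S r k" unfolding S_def
    by (rule member_le_sum) auto
  then show ?thesis by simp
qed

lemma S_step:
  assumes "1 < r"
  shows "S r (Suc k) \<le> 2 powr r * S r k"
proof -
  have "S r (Suc k) = 1 + (\<Sum>i\<le>k. (real (k choose i) + real (k choose Suc i)) powr r)"
    unfolding S_def by (subst sum.atMost_Suc_shift) simp
  also have "\<dots> \<le> 1 + (\<Sum>i\<le>k. 2 powr (r - 1) * (real (k choose i) powr r + real (k choose Suc i) powr r))"
    using assms by (intro add_left_mono sum_mono pow_sum_convex) auto
  also have "(\<Sum>i\<le>k. real (k choose Suc i) powr r) = S r k - 1"
  proof -
    have "S r k + 0 = (\<Sum>i\<le>Suc k. real (k choose i) powr r)"
      unfolding S_def by simp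
    also have "\<dots> = 1 + (\<Sum>i\<le>k. real (k choose Suc i) powr r)"
      by (subst sum.atMost_Suc_shift) simp
    finally show ?thesis by simp
  qed
  hence "(\<Sum>i\<le>k. 2 powr (r - 1) * (real (k choose i) powr r + real (k choose Suc i) powr r))
        = 2 powr (r - 1) * (S r k + (S r k - 1))"
    by (simp add: sum_distrib_left[symmetric] sum.distrib S_def)
  also have "1 + 2 powr (r - 1) * (S r k + (S r k - 1)) \<le> 2 powr r * S r k"
  proof -
    have "1 \<le> 2 powr (r - 1)" using assms by (simp add: ge_one_powr_ge_zero)
    moreover have "2 powr r = 2 * 2 powr (r - 1)" by (simp add: powr_diff)
    ultimately show ?thesis by (simp add: algebra_simps)
  qed
  finally show ?thesis by simp
qed

lemma S_shift:
  assumes "1 < r"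
  shows "S r (m + n) \<le> 2 powr (m * r) * S r n"
proof (induction m)
  case 0 then show ?case by simp
next
  case (Suc m)
  have "S r (Suc m + n) \<le> 2 powr r * S r (m + n)" using S_step[OF assms] by simp
  also have "\<dots> \<le> 2 powr r * (2 powr (m * r) * S r n)"
    using Suc by (intro mult_left_mono) auto
  also have "\<dots> = 2 powr (Suc m * r) * S r n"
    by (simp add: powr_add[symmetric] algebra_simps)
  finally show ?case .
qed

theorem mainTheorem10:
  fixes m n :: nat and r :: real
  assumes "(int m - int n) mod 2 = 0"
    and "1 < r"
  shows "(let N = m + n in
           (2 / (r + 1) +
            (\<Sum>j<N. (real (N choose (j+1)) powr (r+1) - real (N choose j) powr (r+1))
                     / ((r + 1) * (real (N choose (j+1)) - real (N choose j))))) powr (1 / r))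
         \<le> 2 ^ m * (\<Sum>j\<le>n. real (n choose j) powr r) powr (1 / r)"
proof -
  define N where "N = m + n"
  define T where "T = (\<Sum>j<N. (real (N choose (j+1)) powr (r+1) - real (N choose j) powr (r+1))
                     / ((r + 1) * (real (N choose (j+1)) - real (N choose j))))"
  have pos: "0 < real (N choose j)" if "j \<le> N" for j using that by simp
  have T0: "0 \<le> T" unfolding T_def
    using assms(2) by (intro sum_nonneg HH_nonneg) (auto intro: pos)
  have "T \<le> (\<Sum>j<N. (real (N choose (j+1)) powr r + real (N choose j) powr r) / 2)"
    unfolding T_def using assms(2) by (intro sum_mono HH) (auto intro: pos)
  also have "\<dots> = ((\<Sum>j<N. real (N choose (j+1)) powr r) + (\<Sum>j<N. real (N choose j) powr r)) / 2"
    by (simp add: sum.distrib sum_divide_distrib[symmetric])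
  also have "(\<Sum>j<N. real (N choose j) powr r) = S r N - 1"
    unfolding S_def by (simp add: lessThan_Suc_atMost[symmetric])
  also have "(\<Sum>j<N. real (N choose (j+1)) powr r) = S r N - 1"
  proof -
    have "S r N = (\<Sum>j<Suc N. real (N choose j) powr r)"
      unfolding S_def by (simp add: lessThan_Suc_atMost)
    also have "\<dots> = 1 + (\<Sum>j<N. real (N choose (j+1)) powr r)"
      by (subst sum.lessThan_Suc_shift) simp
    finally show ?thesis by simp
  qed
  finally have Tle: "T \<le> S r N - 1" by simp
  have "2 / (r + 1) \<le> 1" using assms by simp
  with Tle have inner: "2 / (r + 1) + T \<le> S r N" by simp
  have "(2 / (r + 1) + T) powr (1 / r) \<le> S r N powr (1 / r)"
    using inner T0 assms by (intro powr_mono2) auto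
  also have "\<dots> \<le> (2 powr (m * r) * S r n) powr (1 / r)"
    using S_shift[OF assms(2), of m n] S_ge1[of r N] assms unfolding N_def
    by (intro powr_mono2) auto
  also have "\<dots> = 2 ^ m * S r n powr (1 / r)"
    using assms S_ge1[of r n]
    by (simp add: powr_mult powr_powr powr_realpow)
  finally show ?thesis unfolding Let_def N_def[symmetric] T_def[symmetric] S_def .
qed

end
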